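(* Let $\mathcal{X}=\{1,\dots,n\}$, let $\pi$ be a strictly positive probability distribution on $\mathcal{X}$, let $P$ be a $\pi$-reversible transition matrix and let $\alpha\in[0,1]$. For every $S\subset\mathcal{X}$ with $S\neq\emptyset,\mathcal{X}$, $$\|A_\alpha(S)-\Pi\|_{F,\pi}^2=\alpha^2\operatorname{Tr}(P^2)-2\alpha(1-\alpha)g(S)+1-2\alpha^2=F_1(S)-F_2(S),$$ where $$F_1(S)=2\alpha(1-\alpha)\Big(\frac{1}{\pi(S)}\sum_{x,y\in S'}\pi(x)P(x,y)+\frac{1}{\pi(S')}\sum_{x,y\in S}\pi(x)P(x,y)\Big),$$ $$F_2(S)=\frac{2\alpha(1-\alpha)}{\pi(S)\pi(S')}+6\alpha^2-4\alpha-1-\alpha^2\operatorname{Tr}(P^2),$$ and both $F_1$ and $F_2$ are supermodular on $\{S\subseteq\mathcal{X}:0<\pi(S)<1\}$.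
   Context: $S'=\mathcal{X}\setminus S$; $g(S)=\frac{1}{\pi(S)\pi(S')}\sum_{x\in S,\,y\in S'}\pi(x)P(x,y)$. $\pi$-reversible means $\pi(x)P(x,y)=\pi(y)P(y,x)$. $A_\alpha(S)=\alpha P+(1-\alpha)G_S$ where $G_S(x,y)=\pi(y)/\pi(\mathcal{O}(x))$ if $y\in\mathcal{O}(x)$ and $0$ otherwise, $\mathcal{O}(x)\in\{S,S'\}$ the block containing $x$. $\Pi$ is the matrix with every row equal to $\pi$; $\|M\|_{F,\pi}^2=\operatorname{Tr}(M^*M)$ with $M^*(x,y)=\pi(y)M(y,x)/\pi(x)$. A set function $f$ is supermodular if $f(A\cap B)+f(A\cup B)\ge f(A)+f(B)$. *)

theory Defs
  imports Complex_Main
begin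

(* State space X = {1..n}; matrices are functions nat => nat => real, only entries on X matter. *)

definition piS :: "(nat \<Rightarrow> real) \<Rightarrow> nat set \<Rightarrow> real" where
  "piS \<pi> S = (\<Sum>x\<in>S. \<pi> x)"

definition prob_dist_pos :: "nat \<Rightarrow> (nat \<Rightarrow> real) \<Rightarrow> bool" where
  "prob_dist_pos n \<pi> \<longleftrightarrow> (\<forall>x\<in>{1..n}. \<pi> x > 0) \<and> (\<Sum>x\<in>{1..n}. \<pi> x) = 1"

definition transition_matrix :: "nat \<Rightarrow> (nat \<Rightarrow> nat \<Rightarrow> real) \<Rightarrow> bool" where
  "transition_matrix n P \<longleftrightarrow>
     (\<forall>x\<in>{1..n}. \<forall>y\<in>{1..n}. P x y \<ge> 0) \<and> (\<forall>x\<in>{1..n}. (\<Sum>y\<in>{1..n}. P x y) = 1)"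

definition reversible :: "nat \<Rightarrow> (nat \<Rightarrow> real) \<Rightarrow> (nat \<Rightarrow> nat \<Rightarrow> real) \<Rightarrow> bool" where
  "reversible n \<pi> P \<longleftrightarrow> (\<forall>x\<in>{1..n}. \<forall>y\<in>{1..n}. \<pi> x * P x y = \<pi> y * P y x)"

definition compl :: "nat \<Rightarrow> nat set \<Rightarrow> nat set" where
  "compl n S = {1..n} - S"

definition gS :: "nat \<Rightarrow> (nat \<Rightarrow> real) \<Rightarrow> (nat \<Rightarrow> nat \<Rightarrow> real) \<Rightarrow> nat set \<Rightarrow> real" where
  "gS n \<pi> P S = (\<Sum>x\<in>S. \<Sum>y\<in>compl n S. \<pi> x * P x y) / (piS \<pi> S * piS \<pi> (compl n S))"

definition blk :: "nat \<Rightarrow> nat set \<Rightarrow> nat \<Rightarrow> nat set" where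
  "blk n S x = (if x \<in> S then S else compl n S)"

definition G_S :: "nat \<Rightarrow> (nat \<Rightarrow> real) \<Rightarrow> nat set \<Rightarrow> nat \<Rightarrow> nat \<Rightarrow> real" where
  "G_S n \<pi> S x y = (if y \<in> blk n S x then \<pi> y / piS \<pi> (blk n S x) else 0)"

definition A_alpha :: "nat \<Rightarrow> (nat \<Rightarrow> real) \<Rightarrow> (nat \<Rightarrow> nat \<Rightarrow> real) \<Rightarrow> real \<Rightarrow> nat set \<Rightarrow> nat \<Rightarrow> nat \<Rightarrow> real" where
  "A_alpha n \<pi> P \<alpha> S x y = \<alpha> * P x y + (1 - \<alpha>) * G_S n \<pi> S x y"

definition PiM :: "(nat \<Rightarrow> real) \<Rightarrow> nat \<Rightarrow> nat \<Rightarrow> real" where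
  "PiM \<pi> x y = \<pi> y"

definition mmult :: "nat \<Rightarrow> (nat \<Rightarrow> nat \<Rightarrow> real) \<Rightarrow> (nat \<Rightarrow> nat \<Rightarrow> real) \<Rightarrow> nat \<Rightarrow> nat \<Rightarrow> real" where
  "mmult n M N x y = (\<Sum>z\<in>{1..n}. M x z * N z y)"

definition mtrace :: "nat \<Rightarrow> (nat \<Rightarrow> nat \<Rightarrow> real) \<Rightarrow> real" where
  "mtrace n M = (\<Sum>x\<in>{1..n}. M x x)"

(* adjoint in L^2(pi): M^*(x,y) = pi(y) M(y,x) / pi(x) *)
definition adjoint :: "(nat \<Rightarrow> real) \<Rightarrow> (nat \<Rightarrow> nat \<Rightarrow> real) \<Rightarrow> nat \<Rightarrow> nat \<Rightarrow> real" where
  "adjoint \<pi> M x y = \<pi> y * M y x / \<pi> x"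

definition frob_sq :: "nat \<Rightarrow> (nat \<Rightarrow> real) \<Rightarrow> (nat \<Rightarrow> nat \<Rightarrow> real) \<Rightarrow> real" where
  "frob_sq n \<pi> M = mtrace n (mmult n (adjoint \<pi> M) M)"

definition msub :: "(nat \<Rightarrow> nat \<Rightarrow> real) \<Rightarrow> (nat \<Rightarrow> nat \<Rightarrow> real) \<Rightarrow> nat \<Rightarrow> nat \<Rightarrow> real" where
  "msub M N x y = M x y - N x y"

definition F1 :: "nat \<Rightarrow> (nat \<Rightarrow> real) \<Rightarrow> (nat \<Rightarrow> nat \<Rightarrow> real) \<Rightarrow> real \<Rightarrow> nat set \<Rightarrow> real" where
  "F1 n \<pi> P \<alpha> S = 2 * \<alpha> * (1 - \<alpha>) *
     ((\<Sum>x\<in>compl n S. \<Sum>y\<in>compl n S. \<pi> x * P x y) / piS \<pi> S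
      + (\<Sum>x\<in>S. \<Sum>y\<in>S. \<pi> x * P x y) / piS \<pi> (compl n S))"

definition F2 :: "nat \<Rightarrow> (nat \<Rightarrow> real) \<Rightarrow> (nat \<Rightarrow> nat \<Rightarrow> real) \<Rightarrow> real \<Rightarrow> nat set \<Rightarrow> real" where
  "F2 n \<pi> P \<alpha> S = 2 * \<alpha> * (1 - \<alpha>) / (piS \<pi> S * piS \<pi> (compl n S))
     + 6 * \<alpha>^2 - 4 * \<alpha> - 1 - \<alpha>^2 * mtrace n (mmult n P P)"

(* supermodularity on a (not necessarily lattice-closed) family D: the inequality is
   required whenever A, B, A \<inter> B, A \<union> B all lie in D *)
definition supermodular_on :: "'a set set \<Rightarrow> ('a set \<Rightarrow> real) \<Rightarrow> bool" where
  "supermodular_on D f \<longleftrightarrow>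
     (\<forall>A\<in>D. \<forall>B\<in>D. A \<inter> B \<in> D \<longrightarrow> A \<union> B \<in> D \<longrightarrow> f (A \<inter> B) + f (A \<union> B) \<ge> f A + f B)"

end

theory Submission
  imports Defs
begin

lemma recip_ineq:
  fixes p q r s :: real
  assumes "0 < q" "q \<le> r" "q \<le> s" "r \<le> p" "s \<le> p" "p + q = r + s"
  shows "1/r + 1/s \<le> 1/p + 1/q"
proof -
  have pos: "0 < p" "0 < r" "0 < s" using assms by linarith+
  define d where "d = p - r"
  have r: "r = p - d" and s: "s = q + d" using assms d_def by linarith+
  have e: "r*s = p*q + d*(p - s)" unfolding r s by (simp add: algebra_simps)
  have "d*(p-s) \<ge> 0" using assms d_def by simp
  then have pq: "p*q \<le> r*s" using e by linarith
  have "(r+s)/(r*s) \<le> (r+s)/(p*q)"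
    by (rule divide_left_mono) (use pq pos assms in auto)
  then show ?thesis using pos assms by (simp add: field_simps)
qed

lemma prod_super:
  fixes fa fb fl fh ga gb gl gh :: real
  assumes "0 \<le> fl" "fl \<le> fa" "fl \<le> fb" "ga \<le> gh" "gb \<le> gh" "0 \<le> gh"
    "fa + fb \<le> fl + fh" "ga + gb \<le> gl + gh"
  shows "fa*ga + fb*gb \<le> fl*gl + fh*gh"
proof -
  have 1: "(fa+fb-fl)*gh \<le> fh*gh" using assms by (intro mult_right_mono) auto
  have 2: "fl*(gh-ga) \<le> fa*(gh-ga)" using assms by (intro mult_right_mono) auto
  have 3: "fl*(gh-gb) \<le> fb*(gh-gb)" using assms by (intro mult_right_mono) auto
  have 4: "0 \<le> fl*(gl+gh-ga-gb)" using assms by simp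
  show ?thesis using 1 2 3 4 by (simp add: algebra_simps)
qed

lemma ind_sum:
  fixes w :: "'a \<Rightarrow> 'a \<Rightarrow> real"
  assumes "finite X" "C \<subseteq> X"
  shows "(\<Sum>x\<in>C. \<Sum>y\<in>C. w x y) = (\<Sum>x\<in>X. \<Sum>y\<in>X. if x\<in>C \<and> y\<in>C then w x y else 0)"
proof -
  have "(\<Sum>y\<in>X. if x\<in>C \<and> y\<in>C then w x y else 0) = (if x\<in>C then \<Sum>y\<in>C. w x y else 0)" for x
  proof (cases "x \<in> C")
    case True
    then show ?thesis using sum.inter_restrict[OF assms(1), of "w x" C] assms(2)
      by (simp add: Int_absorb1)
  qed simp
  then have "(\<Sum>x\<in>X. \<Sum>y\<in>X. if x\<in>C \<and> y\<in>C then w x y else 0) = (\<Sum>x\<in>X. if x\<in>C then \<Sum>y\<in>C. w x y else 0)"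
    by simp
  also have "\<dots> = (\<Sum>x\<in>C. \<Sum>y\<in>C. w x y)"
    using sum.inter_restrict[OF assms(1), of "\<lambda>x. \<Sum>y\<in>C. w x y" C] assms(2)
    by (simp add: Int_absorb1)
  finally show ?thesis by simp
qed

lemma Q_super:
  fixes w :: "'a \<Rightarrow> 'a \<Rightarrow> real"
  assumes "finite X" "A \<subseteq> X" "B \<subseteq> X" "\<And>x y. x\<in>X \<Longrightarrow> y\<in>X \<Longrightarrow> 0 \<le> w x y"
  shows "(\<Sum>x\<in>A. \<Sum>y\<in>A. w x y) + (\<Sum>x\<in>B. \<Sum>y\<in>B. w x y)
     \<le> (\<Sum>x\<in>A\<inter>B. \<Sum>y\<in>A\<inter>B. w x y) + (\<Sum>x\<in>A\<union>B. \<Sum>y\<in>A\<union>B. w x y)"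
proof -
  have s: "A \<inter> B \<subseteq> X" "A \<union> B \<subseteq> X" using assms by auto
  show ?thesis
    unfolding ind_sum[OF assms(1) assms(2), of w] ind_sum[OF assms(1) assms(3), of w]
      ind_sum[OF assms(1) s(1), of w] ind_sum[OF assms(1) s(2), of w]
    unfolding sum.distrib[symmetric]
    by (intro sum_mono) (auto simp: assms(4))
qed

lemma Q_mono:
  fixes w :: "'a \<Rightarrow> 'a \<Rightarrow> real"
  assumes "finite X" "C \<subseteq> D" "D \<subseteq> X" "\<And>x y. x\<in>X \<Longrightarrow> y\<in>X \<Longrightarrow> 0 \<le> w x y"
  shows "(\<Sum>x\<in>C. \<Sum>y\<in>C. w x y) \<le> (\<Sum>x\<in>D. \<Sum>y\<in>D. w x y)"
proof -
  have s: "C \<subseteq> X" using assms by auto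
  show ?thesis
    unfolding ind_sum[OF assms(1) s, of w] ind_sum[OF assms(1) assms(3), of w]
    by (intro sum_mono) (use assms in auto)
qed

lemma Q_nonneg:
  fixes w :: "'a \<Rightarrow> 'a \<Rightarrow> real"
  assumes "finite X" "C \<subseteq> X" "\<And>x y. x\<in>X \<Longrightarrow> y\<in>X \<Longrightarrow> 0 \<le> w x y"
  shows "0 \<le> (\<Sum>x\<in>C. \<Sum>y\<in>C. w x y)"
  using assms by (intro sum_nonneg) blast+


lemma part1:
  fixes n :: nat and \<pi> :: "nat \<Rightarrow> real" and P :: "nat \<Rightarrow> nat \<Rightarrow> real" and \<alpha> :: real
  assumes pos: "\<And>x. x \<in> {1..n} \<Longrightarrow> 0 < \<pi> x"
    and sum1: "(\<Sum>x\<in>{1..n}. \<pi> x) = 1"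
    and row: "\<And>x. x \<in> {1..n} \<Longrightarrow> (\<Sum>y\<in>{1..n}. P x y) = 1"
    and rev: "\<And>x y. x \<in> {1..n} \<Longrightarrow> y \<in> {1..n} \<Longrightarrow> \<pi> x * P x y = \<pi> y * P y x"
    and S: "S \<subseteq> {1..n}" "S \<noteq> {}" "S \<noteq> {1..n}"
  shows "frob_sq n \<pi> (msub (A_alpha n \<pi> P \<alpha> S) (PiM \<pi>))
              = \<alpha>^2 * mtrace n (mmult n P P) - 2 * \<alpha> * (1 - \<alpha>) * gS n \<pi> P S + 1 - 2 * \<alpha>^2
          \<and> \<alpha>^2 * mtrace n (mmult n P P) - 2 * \<alpha> * (1 - \<alpha>) * gS n \<pi> P S + 1 - 2 * \<alpha>^2
              = F1 n \<pi> P \<alpha> S - F2 n \<pi> P \<alpha> S"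
proof -
  define X where "X = {1..n}"
  define S' where "S' = X - S"
  have fX: "finite X" unfolding X_def by simp
  have SX: "S \<subseteq> X" and S'X: "S' \<subseteq> X" using S unfolding X_def S'_def by auto
  have cS: "compl n S = S'" unfolding compl_def S'_def X_def ..
  have S'ne: "S' \<noteq> {}" using S unfolding S'_def X_def by auto
  define Q where "Q A B = (\<Sum>x\<in>A. \<Sum>y\<in>B. \<pi> x * P x y)" for A B
  define a where "a = piS \<pi> S"
  define b where "b = piS \<pi> S'"
  define q where "q = Q S S'"
  have posS: "0 < piS \<pi> A" if "A \<subseteq> X" "A \<noteq> {}" for A
    unfolding piS_def using that fX pos unfolding X_def
    by (intro sum_pos) (auto intro: finite_subset)
  have a0: "0 < a" using posS[OF SX S(2)] a_def by simp
  have b0: "0 < b" using posS[OF S'X S'ne] b_def by simp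
  have ab: "a + b = 1"
    using sum.subset_diff[OF SX fX, of \<pi>] sum1 unfolding a_def b_def piS_def S'_def X_def by simp
  have QX: "Q A X = piS \<pi> A" if "A \<subseteq> X" for A
    unfolding Q_def piS_def
  proof (rule sum.cong)
    fix x assume "x \<in> A"
    then have "x \<in> X" using that by auto
    then show "(\<Sum>y\<in>X. \<pi> x * P x y) = \<pi> x"
      using row[of x] unfolding X_def by (simp add: sum_distrib_left[symmetric])
  qed simp
  have Qsym: "Q A B = Q B A" if "A \<subseteq> X" "B \<subseteq> X" for A B
  proof -
    have "Q B A = (\<Sum>y\<in>A. \<Sum>x\<in>B. \<pi> x * P x y)" unfolding Q_def by (rule sum.swap)
    also have "\<dots> = Q A B" unfolding Q_def
      by (intro sum.cong refl) (metis X_def rev subsetD that)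
    finally show ?thesis by simp
  qed
  have Qsplit: "Q A X = Q A (X - B) + Q A B" if "B \<subseteq> X" for A B
    unfolding Q_def sum.distrib[symmetric]
    by (rule sum.cong[OF refl], rule sum.subset_diff[OF that fX])
  have QSS: "Q S S = a - q"
    using Qsplit[of S S] QX[OF SX] SX unfolding a_def q_def S'_def by simp
  have QS'S': "Q S' S' = b - q"
  proof -
    have "X - S' = S" using SX unfolding S'_def by auto
    then show ?thesis
      using Qsplit[of S' S'] QX[OF S'X] S'X Qsym[OF SX S'X] unfolding b_def q_def by simp
  qed
  have g: "gS n \<pi> P S = q / (a*b)"
    unfolding gS_def cS q_def Q_def a_def b_def ..
  define T where "T = mtrace n (mmult n P P)"
  have part2: "\<alpha>^2 * T - 2 * \<alpha> * (1 - \<alpha>) * (q/(a*b)) + 1 - 2 * \<alpha>^2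
              = F1 n \<pi> P \<alpha> S - F2 n \<pi> P \<alpha> S"
  proof -
    have F1: "F1 n \<pi> P \<alpha> S = 2*\<alpha>*(1-\<alpha>) * ((b-q)/a + (a-q)/b)"
      unfolding F1_def cS using QSS QS'S' unfolding Q_def a_def b_def by simp
    have F2: "F2 n \<pi> P \<alpha> S = 2*\<alpha>*(1-\<alpha>)/(a*b) + 6*\<alpha>^2 - 4*\<alpha> - 1 - \<alpha>^2*T"
      unfolding F2_def cS a_def b_def T_def ..
    have key: "(b-q)/a + (a-q)/b - 1/(a*b) = -2 - q/(a*b)"
    proof -
      have "(b-q)/a + (a-q)/b - 1/(a*b) = ((b-q)*b + (a-q)*a - 1)/(a*b)"
        using a0 b0 by (simp add: field_simps)
      also have "(b-q)*b + (a-q)*a - 1 = -2*(a*b) - q"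
      proof -
        have bb: "b = 1 - a" using ab by simp
        show ?thesis unfolding bb by (simp add: algebra_simps)
      qed
      also have "(-2*(a*b) - q)/(a*b) = -2 - q/(a*b)" using a0 b0 by (simp add: field_simps)
      finally show ?thesis .
    qed
    have "F1 n \<pi> P \<alpha> S - F2 n \<pi> P \<alpha> S
       = 2*\<alpha>*(1-\<alpha>) * ((b-q)/a + (a-q)/b - 1/(a*b)) - 6*\<alpha>^2 + 4*\<alpha> + 1 + \<alpha>^2*T"
      unfolding F1 F2 using a0 b0 by (simp add: field_simps)
    also have "\<dots> = 2*\<alpha>*(1-\<alpha>) * (-2 - q/(a*b)) - 6*\<alpha>^2 + 4*\<alpha> + 1 + \<alpha>^2*T"
      unfolding key ..
    finally show ?thesis by (simp add: algebra_simps power2_eq_square)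
  qed
  define G where "G = G_S n \<pi> S"
  define M where "M = msub (A_alpha n \<pi> P \<alpha> S) (PiM \<pi>)"
  have blk_cases: "blk n S z = S \<or> blk n S z = S'" for z unfolding blk_def cS by auto
  have blkX: "blk n S z \<subseteq> X" for z using blk_cases[of z] SX S'X by auto
  have blkpos: "0 < piS \<pi> (blk n S z)" for z using blk_cases[of z] a0 b0 a_def b_def by auto
  have Gform: "G z x = (if x \<in> blk n S z then \<pi> x / piS \<pi> (blk n S z) else 0)" for z x
    unfolding G_def G_S_def ..
  have Mform: "M z x = \<alpha> * P z x + (1-\<alpha>) * G z x - \<pi> x" for z x
    unfolding M_def msub_def A_alpha_def PiM_def G_def ..
  have split: "(\<Sum>z\<in>X. h z (blk n S z)) = (\<Sum>z\<in>S. h z S) + (\<Sum>z\<in>S'. h z S')" for h :: "nat \<Rightarrow> nat set \<Rightarrow> real"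
  proof -
    have "(\<Sum>z\<in>X. h z (blk n S z)) = (\<Sum>z\<in>S'. h z (blk n S z)) + (\<Sum>z\<in>S. h z (blk n S z))"
      using sum.subset_diff[OF SX fX] unfolding S'_def by blast
    also have "(\<Sum>z\<in>S'. h z (blk n S z)) = (\<Sum>z\<in>S'. h z S')"
      by (rule sum.cong) (auto simp: blk_def cS S'_def)
    also have "(\<Sum>z\<in>S. h z (blk n S z)) = (\<Sum>z\<in>S. h z S)"
      by (rule sum.cong) (auto simp: blk_def)
    finally show ?thesis by simp
  qed
  have restr: "(\<Sum>x\<in>X. if x \<in> blk n S z then f x else 0) = (\<Sum>x\<in>blk n S z. f x)" for z and f :: "nat \<Rightarrow> real"
    using sum.inter_restrict[OF fX, of f "blk n S z"] blkX[of z] by (simp add: Int_absorb1)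
  have frob: "frob_sq n \<pi> M = (\<Sum>z\<in>X. \<Sum>x\<in>X. \<pi> z * M z x / \<pi> x * M z x)"
    unfolding frob_sq_def mtrace_def mmult_def adjoint_def X_def by (rule sum.swap)
  have pw: "\<pi> z * M z x / \<pi> x * M z x =
      \<alpha>^2*(\<pi> z*P z x*P z x/\<pi> x) + (1-\<alpha>)^2*(\<pi> z*G z x*G z x/\<pi> x) + \<pi> z*\<pi> x
      + 2*\<alpha>*(1-\<alpha>)*(\<pi> z*P z x*G z x/\<pi> x) - 2*\<alpha>*(\<pi> z*P z x) - 2*(1-\<alpha>)*(\<pi> z*G z x)"
    if "x \<in> X" for z x
  proof -
    have "\<pi> x \<noteq> 0" using pos that unfolding X_def by force
    then show ?thesis unfolding Mform by (simp add: field_simps power2_eq_square)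
  qed
  have decomp: "frob_sq n \<pi> M =
      \<alpha>^2*(\<Sum>z\<in>X. \<Sum>x\<in>X. \<pi> z*P z x*P z x/\<pi> x) + (1-\<alpha>)^2*(\<Sum>z\<in>X. \<Sum>x\<in>X. \<pi> z*G z x*G z x/\<pi> x)
      + (\<Sum>z\<in>X. \<Sum>x\<in>X. \<pi> z*\<pi> x)
      + 2*\<alpha>*(1-\<alpha>)*(\<Sum>z\<in>X. \<Sum>x\<in>X. \<pi> z*P z x*G z x/\<pi> x) - 2*\<alpha>*(\<Sum>z\<in>X. \<Sum>x\<in>X. \<pi> z*P z x)
      - 2*(1-\<alpha>)*(\<Sum>z\<in>X. \<Sum>x\<in>X. \<pi> z*G z x)"
    unfolding frob using pw by (simp add: sum.distrib sum_subtractf sum_distrib_left)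
  have s1: "(\<Sum>z\<in>X. \<Sum>x\<in>X. \<pi> z*P z x*P z x/\<pi> x) = T"
  proof -
    have "\<pi> z*P z x*P z x/\<pi> x = P z x * P x z" if "z \<in> X" "x \<in> X" for z x
    proof -
      have "\<pi> x \<noteq> 0" using pos that unfolding X_def by force
      moreover have "\<pi> z*P z x = \<pi> x * P x z" using rev that unfolding X_def by blast
      ultimately show ?thesis by (simp add: field_simps)
    qed
    then have "(\<Sum>z\<in>X. \<Sum>x\<in>X. \<pi> z*P z x*P z x/\<pi> x) = (\<Sum>z\<in>X. \<Sum>x\<in>X. P z x * P x z)"
      by (intro sum.cong refl) auto
    also have "\<dots> = T" unfolding T_def mtrace_def mmult_def X_def ..
    finally show ?thesis .
  qed
  have s2: "(\<Sum>z\<in>X. \<Sum>x\<in>X. \<pi> z*G z x*G z x/\<pi> x) = 2"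
  proof -
    have "(\<Sum>x\<in>X. \<pi> z*G z x*G z x/\<pi> x) = \<pi> z / piS \<pi> (blk n S z)" if "z \<in> X" for z
    proof -
      have "(\<Sum>x\<in>X. \<pi> z*G z x*G z x/\<pi> x) = (\<Sum>x\<in>X. if x \<in> blk n S z then \<pi> z * \<pi> x / (piS \<pi> (blk n S z))^2 else 0)"
      proof (rule sum.cong[OF refl])
        fix x assume "x \<in> X"
        then have "\<pi> x \<noteq> 0" using pos unfolding X_def by force
        then show "\<pi> z*G z x*G z x/\<pi> x = (if x \<in> blk n S z then \<pi> z * \<pi> x / (piS \<pi> (blk n S z))^2 else 0)"
          unfolding Gform by (simp add: field_simps power2_eq_square)
      qed
      also have "\<dots> = (\<Sum>x\<in>blk n S z. \<pi> z * \<pi> x / (piS \<pi> (blk n S z))^2)" by (rule restr)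
      also have "\<dots> = \<pi> z * piS \<pi> (blk n S z) / (piS \<pi> (blk n S z))^2"
        unfolding piS_def by (simp add: sum_divide_distrib[symmetric] sum_distrib_left[symmetric])
      also have "\<dots> = \<pi> z / piS \<pi> (blk n S z)" using blkpos[of z] by (simp add: power2_eq_square)
      finally show ?thesis .
    qed
    then have "(\<Sum>z\<in>X. \<Sum>x\<in>X. \<pi> z*G z x*G z x/\<pi> x) = (\<Sum>z\<in>X. \<pi> z / piS \<pi> (blk n S z))"
      by (rule sum.cong[OF refl])
    also have "\<dots> = (\<Sum>z\<in>S. \<pi> z / a) + (\<Sum>z\<in>S'. \<pi> z / b)"
      using split[of "\<lambda>z B. \<pi> z / piS \<pi> B"] unfolding a_def b_def by simp
    also have "\<dots> = 2" using a0 b0 unfolding a_def b_def piS_def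
      by (simp add: sum_divide_distrib[symmetric])
    finally show ?thesis .
  qed
  have s3: "(\<Sum>z\<in>X. \<Sum>x\<in>X. \<pi> z*\<pi> x) = 1"
    using sum1 unfolding X_def by (simp add: sum_distrib_left[symmetric] sum_distrib_right[symmetric])
  have s4: "(\<Sum>z\<in>X. \<Sum>x\<in>X. \<pi> z*P z x*G z x/\<pi> x) = (a-q)/a + (b-q)/b"
  proof -
    have "(\<Sum>x\<in>X. \<pi> z*P z x*G z x/\<pi> x) = (\<Sum>x\<in>blk n S z. \<pi> z * P z x) / piS \<pi> (blk n S z)" if "z \<in> X" for z
    proof -
      have "(\<Sum>x\<in>X. \<pi> z*P z x*G z x/\<pi> x) = (\<Sum>x\<in>X. if x \<in> blk n S z then \<pi> z * P z x / piS \<pi> (blk n S z) else 0)"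
      proof (rule sum.cong[OF refl])
        fix x assume "x \<in> X"
        then have "\<pi> x \<noteq> 0" using pos unfolding X_def by force
        then show "\<pi> z*P z x*G z x/\<pi> x = (if x \<in> blk n S z then \<pi> z * P z x / piS \<pi> (blk n S z) else 0)"
          unfolding Gform by (simp add: field_simps)
      qed
      also have "\<dots> = (\<Sum>x\<in>blk n S z. \<pi> z * P z x / piS \<pi> (blk n S z))" by (rule restr)
      also have "\<dots> = (\<Sum>x\<in>blk n S z. \<pi> z * P z x) / piS \<pi> (blk n S z)"
        by (simp add: sum_divide_distrib)
      finally show ?thesis .
    qed
    then have "(\<Sum>z\<in>X. \<Sum>x\<in>X. \<pi> z*P z x*G z x/\<pi> x) = (\<Sum>z\<in>X. (\<Sum>x\<in>blk n S z. \<pi> z * P z x) / piS \<pi> (blk n S z))"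
      by (rule sum.cong[OF refl])
    also have "\<dots> = (\<Sum>z\<in>S. (\<Sum>x\<in>S. \<pi> z * P z x) / a) + (\<Sum>z\<in>S'. (\<Sum>x\<in>S'. \<pi> z * P z x) / b)"
      using split[of "\<lambda>z B. (\<Sum>x\<in>B. \<pi> z * P z x) / piS \<pi> B"] unfolding a_def b_def by simp
    also have "\<dots> = Q S S / a + Q S' S' / b"
      unfolding Q_def by (simp add: sum_divide_distrib[symmetric])
    finally show ?thesis unfolding QSS QS'S' .
  qed
  have s5: "(\<Sum>z\<in>X. \<Sum>x\<in>X. \<pi> z*P z x) = 1"
    using QX[of X] sum1 unfolding Q_def piS_def X_def by simp
  have s6: "(\<Sum>z\<in>X. \<Sum>x\<in>X. \<pi> z*G z x) = 1"
  proof -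
    have "(\<Sum>x\<in>X. \<pi> z*G z x) = \<pi> z" if "z \<in> X" for z
    proof -
      have "(\<Sum>x\<in>X. \<pi> z*G z x) = \<pi> z * (\<Sum>x\<in>X. if x \<in> blk n S z then \<pi> x / piS \<pi> (blk n S z) else 0)"
        unfolding Gform by (simp add: sum_distrib_left)
      also have "\<dots> = \<pi> z * (\<Sum>x\<in>blk n S z. \<pi> x / piS \<pi> (blk n S z))" by (simp only: restr)
      also have "\<dots> = \<pi> z" using blkpos[of z] unfolding piS_def by (simp add: sum_divide_distrib[symmetric])
      finally show ?thesis .
    qed
    then have "(\<Sum>z\<in>X. \<Sum>x\<in>X. \<pi> z*G z x) = (\<Sum>z\<in>X. \<pi> z)" by (rule sum.cong[OF refl])
    then show ?thesis using sum1 unfolding X_def by simp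
  qed
  have fin: "(a-q)/a + (b-q)/b = 2 - q/(a*b)"
  proof -
    have "(a-q)/a + (b-q)/b = 2 - q*(a+b)/(a*b)" using a0 b0 by (simp add: field_simps)
    then show ?thesis using ab by simp
  qed
  have part1: "frob_sq n \<pi> M = \<alpha>^2 * T - 2 * \<alpha> * (1 - \<alpha>) * (q/(a*b)) + 1 - 2 * \<alpha>^2"
    unfolding decomp s1 s2 s3 s4 s5 s6 fin by (simp add: algebra_simps power2_eq_square)
  show ?thesis using part1 part2 unfolding M_def T_def g by simp
qed


theorem corollary4p14:
  fixes n :: nat and \<pi> :: "nat \<Rightarrow> real" and P :: "nat \<Rightarrow> nat \<Rightarrow> real" and \<alpha> :: real
  assumes "prob_dist_pos n \<pi>"
    and "transition_matrix n P"
    and "reversible n \<pi> P"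
    and "0 \<le> \<alpha>" and "\<alpha> \<le> 1"
  shows "(\<forall>S. S \<subseteq> {1..n} \<and> S \<noteq> {} \<and> S \<noteq> {1..n} \<longrightarrow>
            frob_sq n \<pi> (msub (A_alpha n \<pi> P \<alpha> S) (PiM \<pi>))
              = \<alpha>^2 * mtrace n (mmult n P P) - 2 * \<alpha> * (1 - \<alpha>) * gS n \<pi> P S + 1 - 2 * \<alpha>^2
          \<and> \<alpha>^2 * mtrace n (mmult n P P) - 2 * \<alpha> * (1 - \<alpha>) * gS n \<pi> P S + 1 - 2 * \<alpha>^2
              = F1 n \<pi> P \<alpha> S - F2 n \<pi> P \<alpha> S)
     \<and> supermodular_on {S. S \<subseteq> {1..n} \<and> 0 < piS \<pi> S \<and> piS \<pi> S < 1} (F1 n \<pi> P \<alpha>)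
     \<and> supermodular_on {S. S \<subseteq> {1..n} \<and> 0 < piS \<pi> S \<and> piS \<pi> S < 1} (F2 n \<pi> P \<alpha>)"
proof -
  define X where "X = {1..n}"
  have fX: "finite X" unfolding X_def by simp
  have pos: "\<And>x. x \<in> {1..n} \<Longrightarrow> 0 < \<pi> x" and sum1: "(\<Sum>x\<in>{1..n}. \<pi> x) = 1"
    using assms(1) unfolding prob_dist_pos_def by auto
  have Pnn: "\<And>x y. x \<in> {1..n} \<Longrightarrow> y \<in> {1..n} \<Longrightarrow> 0 \<le> P x y"
    and row: "\<And>x. x \<in> {1..n} \<Longrightarrow> (\<Sum>y\<in>{1..n}. P x y) = 1"
    using assms(2) unfolding transition_matrix_def by auto
  have rev: "\<And>x y. x \<in> {1..n} \<Longrightarrow> y \<in> {1..n} \<Longrightarrow> \<pi> x * P x y = \<pi> y * P y x"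
    using assms(3) unfolding reversible_def by auto
  have wnn: "\<And>x y. x \<in> X \<Longrightarrow> y \<in> X \<Longrightarrow> 0 \<le> \<pi> x * P x y"
    using pos Pnn unfolding X_def by (simp add: less_imp_le)
  define D where "D = {S. S \<subseteq> {1..n} \<and> 0 < piS \<pi> S \<and> piS \<pi> S < 1}"
  define c where "c = 2 * \<alpha> * (1 - \<alpha>)"
  have c0: "0 \<le> c" unfolding c_def using assms(4,5) by simp
  have pc: "piS \<pi> (compl n S) = 1 - piS \<pi> S" if "S \<subseteq> X" for S
    using sum.subset_diff[OF that fX, of \<pi>] sum1 unfolding piS_def compl_def X_def by simp
  have pmod: "piS \<pi> (A \<inter> B) + piS \<pi> (A \<union> B) = piS \<pi> A + piS \<pi> B" if "A \<subseteq> X" "B \<subseteq> X" for A B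
    using sum.union_inter[of A B \<pi>] that fX unfolding piS_def by (simp add: finite_subset add.commute)
  have pmono: "piS \<pi> A \<le> piS \<pi> B" if "A \<subseteq> B" "B \<subseteq> X" for A B
    unfolding piS_def using that fX pos unfolding X_def
  proof (intro sum_mono2)
    show "finite B" using that(2) fX finite_subset unfolding X_def by blast
    show "\<And>b. b \<in> B - A \<Longrightarrow> 0 \<le> \<pi> b" using that(2) pos unfolding X_def by (meson DiffD1 less_imp_le subsetD)
  qed (use that in auto)
  have cup: "compl n (A \<union> B) = compl n A \<inter> compl n B" for A B unfolding compl_def by auto
  have cap: "compl n (A \<inter> B) = compl n A \<union> compl n B" for A B unfolding compl_def by auto
  have cX: "compl n A \<subseteq> X" for A unfolding compl_def X_def by auto
  have P1: "\<forall>S. S \<subseteq> {1..n} \<and> S \<noteq> {} \<and> S \<noteq> {1..n} \<longrightarrow>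
            frob_sq n \<pi> (msub (A_alpha n \<pi> P \<alpha> S) (PiM \<pi>))
              = \<alpha>^2 * mtrace n (mmult n P P) - 2 * \<alpha> * (1 - \<alpha>) * gS n \<pi> P S + 1 - 2 * \<alpha>^2
          \<and> \<alpha>^2 * mtrace n (mmult n P P) - 2 * \<alpha> * (1 - \<alpha>) * gS n \<pi> P S + 1 - 2 * \<alpha>^2
              = F1 n \<pi> P \<alpha> S - F2 n \<pi> P \<alpha> S"
    using part1[OF pos sum1 row rev] by blast
  have SM: "piS \<pi> A + piS \<pi> B \<le> piS \<pi> (A \<inter> B) + piS \<pi> (A \<union> B)
     \<and> F1 n \<pi> P \<alpha> A + F1 n \<pi> P \<alpha> B \<le> F1 n \<pi> P \<alpha> (A \<inter> B) + F1 n \<pi> P \<alpha> (A \<union> B)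
     \<and> F2 n \<pi> P \<alpha> A + F2 n \<pi> P \<alpha> B \<le> F2 n \<pi> P \<alpha> (A \<inter> B) + F2 n \<pi> P \<alpha> (A \<union> B)"
    if AD: "A \<in> D" "B \<in> D" "A \<inter> B \<in> D" "A \<union> B \<in> D" for A B
  proof -
    have AX: "A \<subseteq> X" and BX: "B \<subseteq> X" using AD unfolding D_def X_def by auto
    have lX: "A \<inter> B \<subseteq> X" and uX: "A \<union> B \<subseteq> X" using AX BX by auto
    define pa where "pa = piS \<pi> A"
    define pb where "pb = piS \<pi> B"
    define pl where "pl = piS \<pi> (A \<inter> B)"
    define pu where "pu = piS \<pi> (A \<union> B)"
    have r: "0 < pa" "pa < 1" "0 < pb" "pb < 1" "0 < pl" "pl < 1" "0 < pu" "pu < 1"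
      using AD unfolding D_def pa_def pb_def pl_def pu_def by auto
    have m: "pl + pu = pa + pb" using pmod[OF AX BX] unfolding pa_def pb_def pl_def pu_def .
    have o: "pl \<le> pa" "pl \<le> pb" "pa \<le> pu" "pb \<le> pu"
      unfolding pa_def pb_def pl_def pu_def using AX BX uX by (auto intro!: pmono)
    have i1: "1/pa + 1/pb \<le> 1/pu + 1/pl"
      by (rule recip_ineq) (use r m o in auto)
    have i2: "1/(1-pa) + 1/(1-pb) \<le> 1/(1-pl) + 1/(1-pu)"
      by (rule recip_ineq) (use r m o in auto)
    have F2e: "F2 n \<pi> P \<alpha> S = c * (1/p + 1/(1-p)) + (6 * \<alpha>^2 - 4 * \<alpha> - 1 - \<alpha>^2 * mtrace n (mmult n P P))"
      if "S \<subseteq> X" "p = piS \<pi> S" "0 < p" "p < 1" for S p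
    proof -
      have "1/p + 1/(1-p) = 1/(p*(1-p))" using that(3,4) by (simp add: field_simps)
      then show ?thesis unfolding F2_def pc[OF that(1)] that(2)[symmetric] c_def by simp
    qed
    have f2: "F2 n \<pi> P \<alpha> A + F2 n \<pi> P \<alpha> B \<le> F2 n \<pi> P \<alpha> (A \<inter> B) + F2 n \<pi> P \<alpha> (A \<union> B)"
    proof -
      have "c * ((1/pa + 1/(1-pa)) + (1/pb + 1/(1-pb))) \<le> c * ((1/pl + 1/(1-pl)) + (1/pu + 1/(1-pu)))"
        using i1 i2 c0 by (intro mult_left_mono) auto
      then show ?thesis
        unfolding F2e[OF AX pa_def r(1,2)] F2e[OF BX pb_def r(3,4)] F2e[OF lX pl_def r(5,6)]
          F2e[OF uX pu_def r(7,8)] by (simp add: algebra_simps)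
    qed
    define Q where "Q C = (\<Sum>x\<in>C. \<Sum>y\<in>C. \<pi> x * P x y)" for C
    have F1e: "F1 n \<pi> P \<alpha> S = c * (Q (compl n S) * (1/p) + Q S * (1/(1-p)))"
      if "S \<subseteq> X" "p = piS \<pi> S" for S p
      unfolding F1_def pc[OF that(1)] that(2) c_def Q_def by simp
    have qA: "Q A * (1/(1-pa)) + Q B * (1/(1-pb)) \<le> Q (A \<inter> B) * (1/(1-pl)) + Q (A \<union> B) * (1/(1-pu))"
    proof (rule prod_super)
      show "0 \<le> Q (A \<inter> B)" unfolding Q_def by (rule Q_nonneg[OF fX lX wnn])
      show "Q (A \<inter> B) \<le> Q A" unfolding Q_def by (rule Q_mono[OF fX _ AX wnn]) auto
      show "Q (A \<inter> B) \<le> Q B" unfolding Q_def by (rule Q_mono[OF fX _ BX wnn]) auto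
      show "Q A + Q B \<le> Q (A \<inter> B) + Q (A \<union> B)" unfolding Q_def by (rule Q_super[OF fX AX BX wnn])
      show "1/(1-pa) \<le> 1/(1-pu)" using r o by (intro divide_left_mono) auto
      show "1/(1-pb) \<le> 1/(1-pu)" using r o by (intro divide_left_mono) auto
      show "0 \<le> 1/(1-pu)" using r by simp
      show "1/(1-pa) + 1/(1-pb) \<le> 1/(1-pl) + 1/(1-pu)" by (rule i2)
    qed
    have qB: "Q (compl n A) * (1/pa) + Q (compl n B) * (1/pb) \<le> Q (compl n (A \<union> B)) * (1/pu) + Q (compl n (A \<inter> B)) * (1/pl)"
    proof (rule prod_super)
      show "0 \<le> Q (compl n (A \<union> B))" unfolding Q_def by (rule Q_nonneg[OF fX cX wnn])
      show "Q (compl n (A \<union> B)) \<le> Q (compl n A)" unfolding Q_def by (rule Q_mono[OF fX _ cX wnn]) (auto simp: cup)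
      show "Q (compl n (A \<union> B)) \<le> Q (compl n B)" unfolding Q_def by (rule Q_mono[OF fX _ cX wnn]) (auto simp: cup)
      show "Q (compl n A) + Q (compl n B) \<le> Q (compl n (A \<union> B)) + Q (compl n (A \<inter> B))"
        unfolding Q_def cup cap by (rule Q_super[OF fX cX cX wnn])
      show "1/pa \<le> 1/pl" using r o by (intro divide_left_mono) auto
      show "1/pb \<le> 1/pl" using r o by (intro divide_left_mono) auto
      show "0 \<le> 1/pl" using r by simp
      show "1/pa + 1/pb \<le> 1/pu + 1/pl" by (rule i1)
    qed
    have f1: "F1 n \<pi> P \<alpha> A + F1 n \<pi> P \<alpha> B \<le> F1 n \<pi> P \<alpha> (A \<inter> B) + F1 n \<pi> P \<alpha> (A \<union> B)"
    proof -
      have "c * ((Q (compl n A) * (1/pa) + Q (compl n B) * (1/pb)) + (Q A * (1/(1-pa)) + Q B * (1/(1-pb))))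
         \<le> c * ((Q (compl n (A \<union> B)) * (1/pu) + Q (compl n (A \<inter> B)) * (1/pl)) + (Q (A \<inter> B) * (1/(1-pl)) + Q (A \<union> B) * (1/(1-pu))))"
        using qA qB c0 by (intro mult_left_mono) auto
      then show ?thesis
        unfolding F1e[OF AX pa_def] F1e[OF BX pb_def] F1e[OF lX pl_def] F1e[OF uX pu_def]
        by (simp add: algebra_simps)
    qed
    show ?thesis using f1 f2 m unfolding pa_def pb_def pl_def pu_def by simp
  qed
  show ?thesis
    using P1 SM unfolding supermodular_on_def D_def[symmetric] by (auto simp: add.commute)
qed

end
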